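(* Let $\mathcal{F}$ be a frame, let $C_s, C_{cut}, C_o \subseteq \mathcal{CH}$ be sets of channels such that $C_{cut}$ is an undirected cut between $C_s$ and $C_o$, and let $f$ be a function on sets of $C_s$-runs. If $\mathcal{F}$ $f$-limits $C_s$-to-$C_{cut}$ flow, then $\mathcal{F}$ $f$-limits $C_s$-to-$C_o$ flow.
   Context: A frame $\mathcal{F}$ consists of pairwise disjoint sets $\mathcal{LO}$ (locations), $\mathcal{CH}$ (channels) and $\mathcal{D}$ (data values). Each channel $c$ either has both a sender location $\mathrm{sender}(c)\in\mathcal{LO}$ and a recipient location $\mathrm{recipient}(c)\in\mathcal{LO}$ (possibly equal), or has neither. For $\ell\in\mathcal{LO}$ let $\mathrm{chans}(\ell)=\{c:\mathrm{sender}(c)=\ell \text{ or } \mathrm{recipient}(c)=\ell\}$. Each location $\ell$ carries a prefix-closed set $\mathrm{traces}(\ell)$ of finite or infinite sequences of labels $(c,v)$ with $c\in\mathrm{chans}(\ell)$, $v\in\mathcal{D}$. Fix a set $E$ of events with functions $\mathrm{chan}:E\to\mathcal{CH}$, $\mathrm{msg}:E\to\mathcal{D}$. A system of events is $\mathcal{B}=(B,\preceq)$ with $B\subseteq E$ and $\preceq$ a partial order on $B$ in which every event has only finitely many predecessors. It is an execution of $\mathcal{F}$, written $\mathcal{B}\in\mathrm{exec}(\mathcal{F})$, iff for every location $\ell$ the set $\{e\in B:\mathrm{sender}(\mathrm{chan}(e))=\ell \text{ or } \mathrm{recipient}(\mathrm{chan}(e))=\ell\}$ is linearly ordered by $\preceq$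 and, read in $\preceq$-order as the sequence of labels $(\mathrm{chan}(e),\mathrm{msg}(e))$, belongs to $\mathrm{traces}(\ell)$. For $C\subseteq\mathcal{CH}$, the restriction $\mathcal{B}|_C$ is $(\{e\in B:\mathrm{chan}(e)\in C\},\ \preceq$ restricted to that set$)$. A $C$-run is a system of events $\mathcal{A}|_C$ with $\mathcal{A}\in\mathrm{exec}(\mathcal{F})$. For $C,C'\subseteq\mathcal{CH}$ and a system of events $\mathcal{B}$, let $J_{C}^{C'}(\mathcal{B})=\{\mathcal{A}|_{C'}:\mathcal{A}\in\mathrm{exec}(\mathcal{F}),\ \mathcal{A}|_C=\mathcal{B}\}$ (the $C'$-runs compatible with $\mathcal{B}$). The undirected graph of $\mathcal{F}$ has vertices $\mathcal{LO}$; an undirected path is a sequence of locations $\ell_0,\dots,\ell_n$ together with channels $c_1,\dots,c_n$ where each $c_k$ has endpoints $\ell_{k-1},\ell_k$ in some direction; the path traverses the $c_k$. $C_{cut}$ is an undirected cut between $C_s$ and $C_o$ iff $C_s,C_{cut},C_o$ are pairwise disjoint and every undirected path from a location that is an endpoint of a channel in $C_o$ to a location that is an endpoint of a channel in $C_s$ traverses some channel in $C_{cut}$. A function $f$ on sets is a blur operator iff (i) $S\subseteq f(S)$ for all $S$; (ii) $f(f(S))=f(S)$ for all $S$; (iii) $f(\bigcup_{a\in I}S_a)=\bigcup_{a\in I}f(S_a)$ for every indexed family. A set $S$ is $f$-blurred iff $f$ is a blur operator and $f(S)=S$. $\mathcal{F}$ $f$-limits $C_s$-to-$C_o$ flow iff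 $f$ is a blur operator and for every $C_o$-run $\mathcal{B}_o$ the set $J_{C_o}^{C_s}(\mathcal{B}_o)$ is $f$-blurred. *)

theory Defs
  imports Main
begin

datatype 'a seq = Fin "'a list" | Inf "nat \<Rightarrow> 'a"

fun seq_idx :: "'a seq \<Rightarrow> nat set" where
  "seq_idx (Fin xs) = {..<length xs}"
| "seq_idx (Inf f) = UNIV"

fun seq_nth :: "'a seq \<Rightarrow> nat \<Rightarrow> 'a" where
  "seq_nth (Fin xs) i = xs ! i"
| "seq_nth (Inf f) i = f i"

fun seq_prefix :: "nat \<Rightarrow> 'a seq \<Rightarrow> 'a seq" where
  "seq_prefix n (Fin xs) = Fin (take n xs)"
| "seq_prefix n (Inf f) = Fin (map f [0..<n])"

text \<open>Locations, channels and data are the (disjoint) types 'loc, 'ch, 'd.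
  ends c = Some (sender c, recipient c) if c has endpoints, None otherwise.\<close>
record ('loc, 'ch, 'd) frame =
  ends :: "'ch \<Rightarrow> ('loc \<times> 'loc) option"
  traces :: "'loc \<Rightarrow> ('ch \<times> 'd) seq set"

definition is_endpoint :: "('loc, 'ch, 'd) frame \<Rightarrow> 'loc \<Rightarrow> 'ch \<Rightarrow> bool" where
  "is_endpoint F l c \<longleftrightarrow> (\<exists>a b. ends F c = Some (a, b) \<and> (l = a \<or> l = b))"

definition chans :: "('loc, 'ch, 'd) frame \<Rightarrow> 'loc \<Rightarrow> 'ch set" where
  "chans F l = {c. is_endpoint F l c}"

definition wf_frame :: "('loc, 'ch, 'd) frame \<Rightarrow> bool" where
  "wf_frame F \<longleftrightarrow>
     (\<forall>l. \<forall>s\<in>traces F l. (\<forall>n. seq_prefix n s \<in> traces F l)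
          \<and> (\<forall>i\<in>seq_idx s. fst (seq_nth s i) \<in> chans F l))"

text \<open>Events form the type 'e (the set E), with functions chan and msg.
  A system of events is a pair (B, R) with R the partial order on B.\<close>
type_synonym 'e sys = "'e set \<times> ('e \<times> 'e) set"

definition system_of_events :: "'e sys \<Rightarrow> bool" where
  "system_of_events S \<longleftrightarrow>
     (let B = fst S; R = snd S in
        R \<subseteq> B \<times> B \<and> partial_order_on B R \<and> (\<forall>e\<in>B. finite {e'. (e', e) \<in> R}))"

definition reads_as :: "('e \<Rightarrow> 'ch) \<Rightarrow> ('e \<Rightarrow> 'd) \<Rightarrow> ('e \<times> 'e) set \<Rightarrow> 'e set
     \<Rightarrow> ('ch \<times> 'd) seq \<Rightarrow> bool" where
  "reads_as chan msg R A s \<longleftrightarrow>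
     (\<exists>g. bij_betw g (seq_idx s) A
        \<and> (\<forall>i\<in>seq_idx s. \<forall>j\<in>seq_idx s. i \<le> j \<longleftrightarrow> (g i, g j) \<in> R)
        \<and> (\<forall>i\<in>seq_idx s. seq_nth s i = (chan (g i), msg (g i))))"

definition loc_events :: "('loc, 'ch, 'd) frame \<Rightarrow> ('e \<Rightarrow> 'ch) \<Rightarrow> 'e set \<Rightarrow> 'loc \<Rightarrow> 'e set" where
  "loc_events F chan B l = {e \<in> B. is_endpoint F l (chan e)}"

definition execs :: "('loc, 'ch, 'd) frame \<Rightarrow> ('e \<Rightarrow> 'ch) \<Rightarrow> ('e \<Rightarrow> 'd) \<Rightarrow> 'e sys set" where
  "execs F chan msg = {S. system_of_events S \<and>
     (\<forall>l. let A = loc_events F chan (fst S) l in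
          total_on A (snd S) \<and> (\<exists>s\<in>traces F l. reads_as chan msg (snd S) A s))}"

definition restrict_sys :: "('e \<Rightarrow> 'ch) \<Rightarrow> 'e sys \<Rightarrow> 'ch set \<Rightarrow> 'e sys" where
  "restrict_sys chan S C =
     (let B' = {e \<in> fst S. chan e \<in> C} in (B', snd S \<inter> (B' \<times> B')))"

definition runs :: "('loc, 'ch, 'd) frame \<Rightarrow> ('e \<Rightarrow> 'ch) \<Rightarrow> ('e \<Rightarrow> 'd) \<Rightarrow> 'ch set \<Rightarrow> 'e sys set" where
  "runs F chan msg C = {restrict_sys chan A C | A. A \<in> execs F chan msg}"

definition compat :: "('loc, 'ch, 'd) frame \<Rightarrow> ('e \<Rightarrow> 'ch) \<Rightarrow> ('e \<Rightarrow> 'd) \<Rightarrow> 'ch set \<Rightarrow> 'ch set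
     \<Rightarrow> 'e sys \<Rightarrow> 'e sys set" where
  "compat F chan msg C C' B =
     {restrict_sys chan A C' | A. A \<in> execs F chan msg \<and> restrict_sys chan A C = B}"

definition undirected_path :: "('loc, 'ch, 'd) frame \<Rightarrow> 'loc list \<Rightarrow> 'ch list \<Rightarrow> bool" where
  "undirected_path F ls cs \<longleftrightarrow> length ls = Suc (length cs) \<and>
     (\<forall>k < length cs. ends F (cs ! k) = Some (ls ! k, ls ! Suc k)
                    \<or> ends F (cs ! k) = Some (ls ! Suc k, ls ! k))"

definition undirected_cut :: "('loc, 'ch, 'd) frame \<Rightarrow> 'ch set \<Rightarrow> 'ch set \<Rightarrow> 'ch set \<Rightarrow> bool" where
  "undirected_cut F Ccut Cs Co \<longleftrightarrow>
     Cs \<inter> Ccut = {} \<and> Cs \<inter> Co = {} \<and> Ccut \<inter> Co = {} \<and>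
     (\<forall>ls cs. undirected_path F ls cs
        \<and> (\<exists>c\<in>Co. is_endpoint F (hd ls) c) \<and> (\<exists>c\<in>Cs. is_endpoint F (last ls) c)
        \<longrightarrow> (\<exists>c\<in>set cs. c \<in> Ccut))"

text \<open>f is a function on sets of elements of the domain D (here: the C_s-runs);
  the blur-operator laws are required for all subsets of D.\<close>
definition blur_operator :: "'a set \<Rightarrow> ('a set \<Rightarrow> 'a set) \<Rightarrow> bool" where
  "blur_operator D f \<longleftrightarrow>
     (\<forall>S. S \<subseteq> D \<longrightarrow> S \<subseteq> f S) \<and>
     (\<forall>S. S \<subseteq> D \<longrightarrow> f (f S) = f S) \<and>
     (\<forall>\<S>. \<S> \<subseteq> Pow D \<longrightarrow> f (\<Union>\<S>) = \<Union>(f ` \<S>))"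

definition blurred :: "'a set \<Rightarrow> ('a set \<Rightarrow> 'a set) \<Rightarrow> 'a set \<Rightarrow> bool" where
  "blurred D f S \<longleftrightarrow> blur_operator D f \<and> f S = S"

definition limits_flow :: "('loc, 'ch, 'd) frame \<Rightarrow> ('e \<Rightarrow> 'ch) \<Rightarrow> ('e \<Rightarrow> 'd)
     \<Rightarrow> ('e sys set \<Rightarrow> 'e sys set) \<Rightarrow> 'ch set \<Rightarrow> 'ch set \<Rightarrow> bool" where
  "limits_flow F chan msg f Cs Co \<longleftrightarrow>
     blur_operator (runs F chan msg Cs) f \<and>
     (\<forall>Bo \<in> runs F chan msg Co. blurred (runs F chan msg Cs) f (compat F chan msg Co Cs Bo))"

end

theory Submission imports Defs begin

definition merge :: "('e\<times>'e) set \<Rightarrow> ('e\<times>'e) set \<Rightarrow> ('e\<times>'e) set" where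
 "merge RA RB = RA \<union> RB \<union> RA O RB \<union> RB O RA"

lemma merge_sym: "merge RA RB = merge RB RA" unfolding merge_def by blast

locale mg =
  fixes XA XB :: "'e set" and RA RB :: "('e\<times>'e) set"
  assumes subA: "RA \<subseteq> XA \<times> XA" and subB: "RB \<subseteq> XB \<times> XB"
   and trA: "trans RA" and trB: "trans RB"
   and asA: "antisym RA" and asB: "antisym RB"
   and agree: "\<And>x y. x \<in> XA \<Longrightarrow> x \<in> XB \<Longrightarrow> y \<in> XA \<Longrightarrow> y \<in> XB \<Longrightarrow> (x,y) \<in> RA \<longleftrightarrow> (x,y) \<in> RB"
begin

lemma restrA: "merge RA RB \<inter> (XA \<times> XA) = RA"
proof -
  have "(x,y) \<in> RA" if "(x,y) \<in> merge RA RB" "x \<in> XA" "y \<in> XA" for x y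
  proof -
    from that(1) consider "(x,y)\<in>RA" | "(x,y)\<in>RB" | c where "(x,c)\<in>RA" "(c,y)\<in>RB" | c where "(x,c)\<in>RB" "(c,y)\<in>RA"
      unfolding merge_def by blast
    then show ?thesis
    proof cases
      case 2 then show ?thesis using agree subB that by blast
    next
      case (3 c) then have "(c,y)\<in>RA" using agree subA subB that by blast
      then show ?thesis using 3 trA by (meson transD)
    next
      case (4 c) then have "(x,c)\<in>RA" using agree subA subB that by blast
      then show ?thesis using 4 trA by (meson transD)
    qed simp
  qed
  then show ?thesis using subA unfolding merge_def by blast
qed

lemma BA: "(a,b)\<in>RB \<Longrightarrow> a \<in> XA \<Longrightarrow> b \<in> XA \<Longrightarrow> (a,b)\<in>RA" using agree subB by blast
lemma AB: "(a,b)\<in>RA \<Longrightarrow> a \<in> XB \<Longrightarrow> b \<in> XB \<Longrightarrow> (a,b)\<in>RB" using agree subA by blast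
lemma tA: "(a,b)\<in>RA \<Longrightarrow> (b,c)\<in>RA \<Longrightarrow> (a,c)\<in>RA" using trA by (meson transD)
lemma tB: "(a,b)\<in>RB \<Longrightarrow> (b,c)\<in>RB \<Longrightarrow> (a,c)\<in>RB" using trB by (meson transD)
lemma inA: "(a,b)\<in>RA \<Longrightarrow> a \<in> XA \<and> b \<in> XA" using subA by blast
lemma inB: "(a,b)\<in>RB \<Longrightarrow> a \<in> XB \<and> b \<in> XB" using subB by blast

lemma trans_merge: "trans (merge RA RB)"
proof (rule transI)
  fix x y z assume xy: "(x,y) \<in> merge RA RB" and yz: "(y,z) \<in> merge RA RB"
  from xy consider "(x,y)\<in>RA" | "(x,y)\<in>RB" | c where "(x,c)\<in>RA" "(c,y)\<in>RB" | c where "(x,c)\<in>RB" "(c,y)\<in>RA"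
      unfolding merge_def by blast
  note c1 = this
  from yz consider "(y,z)\<in>RA" | "(y,z)\<in>RB" | d where "(y,d)\<in>RA" "(d,z)\<in>RB" | d where "(y,d)\<in>RB" "(d,z)\<in>RA"
      unfolding merge_def by blast
  note c2 = this
  show "(x,z) \<in> merge RA RB"
    apply (rule c1; rule c2)
    unfolding merge_def
    by (meson UnI1 UnI2 relcompI BA AB tA tB inA inB)+
qed

lemma mg_sym': "mg XB XA RB RA" using mg_axioms unfolding mg_def by blast
lemma aA: "(a,b)\<in>RA \<Longrightarrow> (b,a)\<in>RA \<Longrightarrow> a = b" using asA by (meson antisymD)
lemma aB: "(a,b)\<in>RB \<Longrightarrow> (b,a)\<in>RB \<Longrightarrow> a = b" using asB by (meson antisymD)

lemma antisym_merge: "antisym (merge RA RB)"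
proof (rule antisymI)
  fix x y assume xy: "(x,y) \<in> merge RA RB" and yz: "(y,x) \<in> merge RA RB"
  from xy consider "(x,y)\<in>RA" | "(x,y)\<in>RB" | c where "(x,c)\<in>RA" "(c,y)\<in>RB" | c where "(x,c)\<in>RB" "(c,y)\<in>RA"
      unfolding merge_def by blast
  note c1 = this
  from yz consider "(y,x)\<in>RA" | "(y,x)\<in>RB" | d where "(y,d)\<in>RA" "(d,x)\<in>RB" | d where "(y,d)\<in>RB" "(d,x)\<in>RA"
      unfolding merge_def by blast
  note c2 = this
  have mx: "a \<in> XA \<union> XB" "b \<in> XA \<union> XB" if "(a,b) \<in> merge RA RB" for a b
    using that subA subB unfolding merge_def by blast+
  have rA: "(a,b)\<in>RA" if "(a,b) \<in> merge RA RB" "a\<in>XA" "b\<in>XA" for a b using restrA that by blast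
  have rB: "(a,b)\<in>RB" if "(a,b) \<in> merge RA RB" "a\<in>XB" "b\<in>XB" for a b
    using mg.restrA[OF mg_sym'] that merge_sym by blast
  show "x = y"
  proof (cases "x \<in> XA \<and> y \<in> XA")
    case True then show ?thesis using rA xy yz aA by blast
  next
    case nA: False
    show ?thesis
    proof (cases "x \<in> XB \<and> y \<in> XB")
      case True then show ?thesis using rB xy yz aB by blast
    next
      case False
      then consider "x \<in> XA" "x \<notin> XB" "y \<in> XB" "y \<notin> XA" | "x \<in> XB" "x \<notin> XA" "y \<in> XA" "y \<notin> XB"
        using nA mx[OF xy] mx[OF yz] by blast
      then show ?thesis
      proof cases
        case 1
        obtain c where c: "(x,c)\<in>RA" "(c,y)\<in>RB" using c1 1 inA inB by metis
        obtain d where d: "(y,d)\<in>RB" "(d,x)\<in>RA" using c2 1 inA inB by metis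
        have "(c,d)\<in>RB" using c d tB by blast
        then have "(c,d)\<in>RA" using BA inA c d by blast
        have "(d,c)\<in>RA" using c d tA by blast
        then have "c = d" using \<open>(c,d)\<in>RA\<close> aA by blast
        then have "x = c" using c d aA by blast
        then show ?thesis using 1 inB c by blast
      next
        case 2
        obtain c where c: "(x,c)\<in>RB" "(c,y)\<in>RA" using c1 2 inA inB by metis
        obtain d where d: "(y,d)\<in>RA" "(d,x)\<in>RB" using c2 2 inA inB by metis
        have "(c,d)\<in>RA" using c d tA by blast
        then have "(c,d)\<in>RB" using AB inB c d by blast
        have "(d,c)\<in>RB" using c d tB by blast
        then have "c = d" using \<open>(c,d)\<in>RB\<close> aB by blast
        then have "x = c" using c d aB by blast
        then show ?thesis using 2 inA c by blast
      qed
    qed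
  qed
qed


lemma fin_merge: assumes "\<And>e. finite {x. (x,e)\<in>RA}" "\<And>e. finite {x. (x,e)\<in>RB}"
  shows "finite {x. (x,e) \<in> merge RA RB}"
proof -
  have "{x. (x,e) \<in> merge RA RB} \<subseteq> {x. (x,e)\<in>RA} \<union> {x. (x,e)\<in>RB} \<union> (\<Union>c\<in>{c. (c,e)\<in>RB}. {x. (x,c)\<in>RA})
     \<union> (\<Union>c\<in>{c. (c,e)\<in>RA}. {x. (x,c)\<in>RB})" unfolding merge_def by blast
  moreover have "finite \<dots>" using assms by auto
  ultimately show ?thesis by (rule finite_subset)
qed
end

lemma mg_sym: "mg XA XB RA RB \<Longrightarrow> mg XB XA RB RA"
  unfolding mg_def by blast

lemma reads_as_restr: "reads_as chan msg R A s = reads_as chan msg (R \<inter> (A \<times> A)) A s"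
  unfolding reads_as_def bij_betw_def by auto

lemma total_on_restr: "total_on A R = total_on A (R \<inter> (A \<times> A))"
  unfolding total_on_def by auto

lemma restrict_restrict: "restrict_sys chan (restrict_sys chan S C) C' = restrict_sys chan S (C \<inter> C')"
  unfolding restrict_sys_def Let_def by auto

lemma restrict_sub: "C' \<subseteq> C \<Longrightarrow> restrict_sys chan S C = restrict_sys chan T C \<Longrightarrow>
   restrict_sys chan S C' = restrict_sys chan T C'"
  by (metis restrict_restrict inf.absorb2)

lemma path_snoc: assumes "undirected_path F ls cs"
  and "ends F c = Some (last ls, l) \<or> ends F c = Some (l, last ls)"
  shows "undirected_path F (ls @ [l]) (cs @ [c])"
proof -
  have ne: "ls \<noteq> []" using assms(1) unfolding undirected_path_def by auto
  have len: "length ls = Suc (length cs)" using assms(1) unfolding undirected_path_def by auto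
  have lst: "ls ! length cs = last ls" using ne len by (simp add: last_conv_nth)
  show ?thesis unfolding undirected_path_def
  proof (intro conjI allI impI)
    show "length (ls @ [l]) = Suc (length (cs @ [c]))" using len by simp
  next
    fix k assume k: "k < length (cs @ [c])"
    show "ends F ((cs @ [c]) ! k) = Some ((ls @ [l]) ! k, (ls @ [l]) ! Suc k) \<or>
          ends F ((cs @ [c]) ! k) = Some ((ls @ [l]) ! Suc k, (ls @ [l]) ! k)"
    proof (cases "k < length cs")
      case True
      then show ?thesis using assms(1) len unfolding undirected_path_def by (simp add: nth_append)
    next
      case False
      then have "k = length cs" using k by simp
      then show ?thesis using assms(2) len lst by (simp add: nth_append)
    qed
  qed
qed

lemma exec_loc:
  assumes "S \<in> execs F chan msg"
  shows "total_on (loc_events F chan (fst S) l) (snd S)"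
    "\<exists>s\<in>traces F l. reads_as chan msg (snd S) (loc_events F chan (fst S) l) s"
  using assms unfolding execs_def Let_def by auto

lemma splice:
  assumes A: "(BA, RA) \<in> execs F chan msg" and B: "(BB, RB) \<in> execs F chan msg"
    and eqK: "restrict_sys chan (BA, RA) K = restrict_sys chan (BB, RB) K"
    and PK: "P \<inter> K = {}" and QK: "Q \<inter> K = {}" and PQ: "P \<inter> Q = {}"
    and cov: "\<And>c. c \<notin> P \<Longrightarrow> c \<notin> Q \<Longrightarrow> c \<in> K"
    and loc: "\<And>l. (\<forall>c. is_endpoint F l c \<longrightarrow> c \<notin> Q) \<or> (\<forall>c. is_endpoint F l c \<longrightarrow> c \<notin> P)"
  shows "\<exists>M\<in>execs F chan msg. restrict_sys chan M (-Q) = restrict_sys chan (BA, RA) (-Q)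
            \<and> restrict_sys chan M (-P) = restrict_sys chan (BB, RB) (-P)"
proof -
  define XA where "XA = {e\<in>BA. chan e \<notin> Q}"
  define XB where "XB = {e\<in>BB. chan e \<notin> P}"
  define RA' where "RA' = RA \<inter> (XA \<times> XA)"
  define RB' where "RB' = RB \<inter> (XB \<times> XB)"
  have sA: "system_of_events (BA, RA)" and sB: "system_of_events (BB, RB)"
    using A B unfolding execs_def by auto
  have poA: "RA \<subseteq> BA \<times> BA" "refl_on BA RA" "trans RA" "antisym RA" "\<And>e. e\<in>BA \<Longrightarrow> finite {e'. (e', e) \<in> RA}"
    using sA unfolding system_of_events_def partial_order_on_def preorder_on_def by auto
  have poB: "RB \<subseteq> BB \<times> BB" "refl_on BB RB" "trans RB" "antisym RB" "\<And>e. e\<in>BB \<Longrightarrow> finite {e'. (e', e) \<in> RB}"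
    using sB unfolding system_of_events_def partial_order_on_def preorder_on_def by auto
  have KA: "{e\<in>BA. chan e \<in> K} = {e\<in>BB. chan e \<in> K}"
    and KR: "RA \<inter> ({e\<in>BA. chan e \<in> K} \<times> {e\<in>BA. chan e \<in> K}) = RB \<inter> ({e\<in>BB. chan e \<in> K} \<times> {e\<in>BB. chan e \<in> K})"
    using eqK unfolding restrict_sys_def Let_def by auto
  have XAB: "x \<in> XA \<Longrightarrow> x \<in> XB \<Longrightarrow> x \<in> {e\<in>BA. chan e \<in> K}" for x
    unfolding XA_def XB_def using cov by auto
  have XBA: "x \<in> XB \<Longrightarrow> chan x \<notin> Q \<Longrightarrow> x \<in> XA" for x
    unfolding XA_def XB_def using cov KA by auto
  have XAB': "x \<in> XA \<Longrightarrow> chan x \<notin> P \<Longrightarrow> x \<in> XB" for x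
    unfolding XA_def XB_def using cov KA by auto
  have mgi: "mg XA XB RA' RB'"
  proof
    show "RA' \<subseteq> XA \<times> XA" "RB' \<subseteq> XB \<times> XB" unfolding RA'_def RB'_def by auto
    show "trans RA'" unfolding RA'_def using poA(3) unfolding trans_def by blast
    show "trans RB'" unfolding RB'_def using poB(3) unfolding trans_def by blast
    show "antisym RA'" unfolding RA'_def using poA(4) antisym_subset by blast
    show "antisym RB'" unfolding RB'_def using poB(4) antisym_subset by blast
    fix x y assume "x \<in> XA" "x \<in> XB" "y \<in> XA" "y \<in> XB"
    then show "(x, y) \<in> RA' \<longleftrightarrow> (x, y) \<in> RB'"
      unfolding RA'_def RB'_def using XAB KA KR by blast
  qed
  interpret mg XA XB RA' RB' by (rule mgi)
  interpret mB: mg XB XA RB' RA' by (rule mg_sym[OF mgi])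
  define R where "R = merge RA' RB'"
  define M where "M = (XA \<union> XB, R)"
  have rA: "R \<inter> (XA \<times> XA) = RA'" unfolding R_def by (rule restrA)
  have rB: "R \<inter> (XB \<times> XB) = RB'" unfolding R_def merge_sym[of RA'] by (rule mB.restrA)
  have Rsub: "R \<subseteq> (XA \<union> XB) \<times> (XA \<union> XB)" unfolding R_def merge_def RA'_def RB'_def by auto
  have sM: "system_of_events M"
    unfolding system_of_events_def M_def Let_def fst_conv snd_conv partial_order_on_def preorder_on_def
  proof (intro conjI ballI)
    show "R \<subseteq> (XA \<union> XB) \<times> (XA \<union> XB)" by (rule Rsub)
    then show "R \<subseteq> (XA \<union> XB) \<times> (XA \<union> XB)" .
    show "refl_on (XA \<union> XB) R"
      unfolding refl_on_def R_def merge_def RA'_def RB'_def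
      using poA(2) poB(2) unfolding refl_on_def XA_def XB_def by auto
    show "trans R" unfolding R_def by (rule trans_merge)
    show "antisym R" unfolding R_def by (rule antisym_merge)
    fix e
    have fA: "finite {x. (x, e') \<in> RA'}" for e'
    proof (cases "e' \<in> BA")
      case True then show ?thesis using poA(5)[OF True] unfolding RA'_def by (auto intro: rev_finite_subset)
    next
      case False then have "{x. (x, e') \<in> RA'} = {}" using poA(1) unfolding RA'_def by auto
      then show ?thesis by simp
    qed
    have fB: "finite {x. (x, e') \<in> RB'}" for e'
    proof (cases "e' \<in> BB")
      case True then show ?thesis using poB(5)[OF True] unfolding RB'_def by (auto intro: rev_finite_subset)
    next
      case False then have "{x. (x, e') \<in> RB'} = {}" using poB(1) unfolding RB'_def by auto
      then show ?thesis by simp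
    qed
    show "finite {e'. (e', e) \<in> R}" unfolding R_def by (rule fin_merge[OF fA fB])
  qed
  have locM: "total_on (loc_events F chan (XA \<union> XB) l) R \<and>
      (\<exists>s\<in>traces F l. reads_as chan msg R (loc_events F chan (XA \<union> XB) l) s)" for l
  proof (cases "\<forall>c. is_endpoint F l c \<longrightarrow> c \<notin> Q")
    case True
    let ?L = "loc_events F chan BA l"
    have L: "loc_events F chan (XA \<union> XB) l = ?L"
      unfolding loc_events_def using True XBA unfolding XA_def by auto
    have LX: "?L \<subseteq> XA" unfolding loc_events_def XA_def using True by auto
    have RL: "R \<inter> (?L \<times> ?L) = RA \<inter> (?L \<times> ?L)" using rA LX unfolding RA'_def by blast
    show ?thesis unfolding L using exec_loc[OF A, of l]
      by (metis RL reads_as_restr total_on_restr fst_conv snd_conv)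
  next
    case False
    then have True': "\<forall>c. is_endpoint F l c \<longrightarrow> c \<notin> P" using loc by blast
    let ?L = "loc_events F chan BB l"
    have L: "loc_events F chan (XA \<union> XB) l = ?L"
      unfolding loc_events_def using True' XAB' unfolding XB_def by auto
    have LX: "?L \<subseteq> XB" unfolding loc_events_def XB_def using True' by auto
    have RL: "R \<inter> (?L \<times> ?L) = RB \<inter> (?L \<times> ?L)" using rB LX unfolding RB'_def by blast
    show ?thesis unfolding L using exec_loc[OF B, of l]
      by (metis RL reads_as_restr total_on_restr fst_conv snd_conv)
  qed
  have Mex: "M \<in> execs F chan msg"
    unfolding execs_def using sM locM unfolding M_def Let_def by auto
  have e1: "restrict_sys chan M (-Q) = restrict_sys chan (BA, RA) (-Q)"
  proof -
    have "{e \<in> XA \<union> XB. chan e \<in> - Q} = XA" using XBA unfolding XA_def by auto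
    moreover have "{e \<in> BA. chan e \<in> - Q} = XA" unfolding XA_def by auto
    ultimately show ?thesis unfolding restrict_sys_def M_def Let_def using rA unfolding RA'_def by auto
  qed
  have e2: "restrict_sys chan M (-P) = restrict_sys chan (BB, RB) (-P)"
  proof -
    have "{e \<in> XA \<union> XB. chan e \<in> - P} = XB" using XAB' unfolding XB_def by auto
    moreover have "{e \<in> BB. chan e \<in> - P} = XB" unfolding XB_def by auto
    ultimately show ?thesis unfolding restrict_sys_def M_def Let_def using rB unfolding RB'_def by auto
  qed
  show ?thesis using Mex e1 e2 by blast
qed

theorem theorem2:
  fixes F :: "('loc, 'ch, 'd) frame"
    and chan :: "'e \<Rightarrow> 'ch" and msg :: "'e \<Rightarrow> 'd"
    and Cs Ccut Co :: "'ch set"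
    and f :: "'e sys set \<Rightarrow> 'e sys set"
  assumes "wf_frame F"
    and "undirected_cut F Ccut Cs Co"
    and "\<forall>S. S \<subseteq> runs F chan msg Cs \<longrightarrow> f S \<subseteq> runs F chan msg Cs"
    and "limits_flow F chan msg f Cs Ccut"
  shows "limits_flow F chan msg f Cs Co"
proof -
  note cut = assms(2)[unfolded undirected_cut_def]
  have cutD: "\<exists>c\<in>set cs. c \<in> Ccut" if "undirected_path F ls cs" "\<exists>c\<in>Co. is_endpoint F (hd ls) c"
     "\<exists>c\<in>Cs. is_endpoint F (last ls) c" for ls cs
    using cut that by blast
  have disj: "Cs \<inter> Co = {}" using cut by blast
  have blur: "blur_operator (runs F chan msg Cs) f" using assms(4) unfolding limits_flow_def by blast
  have bc: "\<And>Bc. Bc \<in> runs F chan msg Ccut \<Longrightarrow> f (compat F chan msg Ccut Cs Bc) = compat F chan msg Ccut Cs Bc"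
    using assms(4) unfolding limits_flow_def blurred_def by blast
  define Reach where "Reach = {l. \<exists>ls cs. undirected_path F ls cs \<and> (\<exists>c\<in>Co. is_endpoint F (hd ls) c)
        \<and> last ls = l \<and> (\<forall>c\<in>set cs. c \<notin> Ccut)}"
  define P where "P = {c. c \<notin> Ccut \<and> (c \<in> Co \<or> (\<exists>l\<in>Reach. is_endpoint F l c))}"
  define Q where "Q = {c. c \<notin> Ccut \<and> c \<notin> P}"
  have CoQ: "Co \<subseteq> -Q" unfolding Q_def P_def by auto
  have CsP: "Cs \<subseteq> -P"
  proof
    fix c assume c: "c \<in> Cs"
    show "c \<in> -P"
    proof
      assume "c \<in> P"
      then consider "c \<in> Co" | l where "l \<in> Reach" "is_endpoint F l c" unfolding P_def by blast
      then show False
      proof cases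
        case 1 then show False using c disj by blast
      next
        case 2
        then obtain ls cs where "undirected_path F ls cs" "\<exists>c\<in>Co. is_endpoint F (hd ls) c"
          "last ls = l" "\<forall>c\<in>set cs. c \<notin> Ccut" unfolding Reach_def by blast
        then show False using cutD[of ls cs] 2 c by blast
      qed
    qed
  qed
  have locc: "(\<forall>c. is_endpoint F l c \<longrightarrow> c \<notin> Q) \<or> (\<forall>c. is_endpoint F l c \<longrightarrow> c \<notin> P)" for l
  proof (cases "l \<in> Reach")
    case True then show ?thesis unfolding Q_def P_def by blast
  next
    case False
    have "c \<notin> P" if ep: "is_endpoint F l c" for c
    proof
      assume "c \<in> P"
      then have cK: "c \<notin> Ccut" unfolding P_def by blast
      from \<open>c \<in> P\<close> consider "c \<in> Co" | l' where "l' \<in> Reach" "is_endpoint F l' c" unfolding P_def by blast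
      then show False
      proof cases
        case 1
        have "undirected_path F [l] []" unfolding undirected_path_def by simp
        then have "l \<in> Reach" unfolding Reach_def using 1 ep
          by (intro CollectI exI[of _ "[l]"] exI[of _ "[]"]) auto
        then show False using False by blast
      next
        case 2
        then obtain ls cs where p: "undirected_path F ls cs" "\<exists>c\<in>Co. is_endpoint F (hd ls) c"
          "last ls = l'" "\<forall>c\<in>set cs. c \<notin> Ccut" unfolding Reach_def by blast
        have ne: "ls \<noteq> []" using p(1) unfolding undirected_path_def by auto
        show False
        proof (cases "l = l'")
          case True then show False using False 2 by blast
        next
          case neq: False
          have "ends F c = Some (last ls, l) \<or> ends F c = Some (l, last ls)"
            using ep 2(2) neq p(3) unfolding is_endpoint_def by auto
          then have "undirected_path F (ls @ [l]) (cs @ [c])" by (rule path_snoc[OF p(1)])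
          moreover have "hd (ls @ [l]) = hd ls" using ne by simp
          ultimately have "l \<in> Reach" unfolding Reach_def using p cK
            by (intro CollectI exI[of _ "ls@[l]"] exI[of _ "cs@[c]"]) auto
          then show False using False by blast
        qed
      qed
    qed
    then show ?thesis by blast
  qed
  have PK: "P \<inter> Ccut = {}" and QK: "Q \<inter> Ccut = {}" and PQ: "P \<inter> Q = {}"
    and cov: "\<And>c. c \<notin> P \<Longrightarrow> c \<notin> Q \<Longrightarrow> c \<in> Ccut" unfolding P_def Q_def by auto
  have Jeq: "compat F chan msg Co Cs Bo = \<Union> (compat F chan msg Ccut Cs ` compat F chan msg Co Ccut Bo)" for Bo
  proof
    show "compat F chan msg Co Cs Bo \<subseteq> \<Union> (compat F chan msg Ccut Cs ` compat F chan msg Co Ccut Bo)"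
      unfolding compat_def by blast
  next
    show "\<Union> (compat F chan msg Ccut Cs ` compat F chan msg Co Ccut Bo) \<subseteq> compat F chan msg Co Cs Bo"
    proof
      fix x assume "x \<in> \<Union> (compat F chan msg Ccut Cs ` compat F chan msg Co Ccut Bo)"
      then obtain A A' where A: "A \<in> execs F chan msg" "restrict_sys chan A Co = Bo"
        and A': "A' \<in> execs F chan msg" "restrict_sys chan A' Ccut = restrict_sys chan A Ccut"
        and x: "x = restrict_sys chan A' Cs"
        unfolding compat_def by blast
      obtain BA RA where [simp]: "A = (BA, RA)" by fastforce
      obtain BB RB where [simp]: "A' = (BB, RB)" by fastforce
      have A1: "(BA,RA) \<in> execs F chan msg" using A(1) by simp
      have B1: "(BB,RB) \<in> execs F chan msg" using A'(1) by simp
      have E1: "restrict_sys chan (BA,RA) Ccut = restrict_sys chan (BB,RB) Ccut" using A'(2)[symmetric] by simp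
      obtain M where M: "M \<in> execs F chan msg" "restrict_sys chan M (-Q) = restrict_sys chan A (-Q)"
        "restrict_sys chan M (-P) = restrict_sys chan A' (-P)"
        using splice[OF A1 B1 E1 PK QK PQ cov locc] by auto
      have "restrict_sys chan M Co = Bo" using restrict_sub[OF CoQ M(2)] A by simp
      moreover have "restrict_sys chan M Cs = x" using restrict_sub[OF CsP M(3)] x by simp
      ultimately show "x \<in> compat F chan msg Co Cs Bo" unfolding compat_def using M(1) by blast
    qed
  qed
  have sub: "compat F chan msg C Cs B \<subseteq> runs F chan msg Cs" for C B
    unfolding compat_def runs_def by blast
  have bu: "\<forall>SS. SS \<subseteq> Pow (runs F chan msg Cs) \<longrightarrow> f (\<Union>SS) = \<Union>(f ` SS)"
    using blur unfolding blur_operator_def by (elim conjE)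
  have "blurred (runs F chan msg Cs) f (compat F chan msg Co Cs Bo)" if "Bo \<in> runs F chan msg Co" for Bo
  proof -
    let ?S = "compat F chan msg Ccut Cs ` compat F chan msg Co Ccut Bo"
    have S: "?S \<subseteq> Pow (runs F chan msg Cs)"
    proof
      fix X assume "X \<in> ?S"
      then obtain Bc where "X = compat F chan msg Ccut Cs Bc" by blast
      then show "X \<in> Pow (runs F chan msg Cs)" using sub[of Ccut Bc] by simp
    qed
    have "f (\<Union> ?S) = \<Union> (f ` ?S)" using bu S by blast
    also have "\<dots> = \<Union> ?S"
    proof -
      have "f X = X" if "X \<in> ?S" for X
      proof -
        from that obtain Bc where X: "X = compat F chan msg Ccut Cs Bc" "Bc \<in> compat F chan msg Co Ccut Bo" by blast
        then have "Bc \<in> runs F chan msg Ccut" unfolding compat_def runs_def by blast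
        then show ?thesis using bc X(1) by simp
      qed
      then show ?thesis by simp
    qed
    finally have "f (compat F chan msg Co Cs Bo) = compat F chan msg Co Cs Bo" by (simp only: Jeq[of Bo])
    then show ?thesis unfolding blurred_def using blur by simp
  qed
  then show ?thesis unfolding limits_flow_def using blur by blast
qed
end
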